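(* Let $k\ge0$, $T\in\mathcal T_h$, and let $\mathrm s_T$ be a bilinear form on $\underline U_T^k$ satisfying (S1)–(S3) and depending on its arguments only through the residuals $\delta_T^k$ and $(\delta_{TF}^k)_{F\in\mathcal F_T}$, i.e. $\mathrm s_T(\underline u_T,\underline v_T)=\mathrm s_T(\underline u_T',\underline v_T')$ whenever $\delta_T^k\underline u_T=\delta_T^k\underline u_T'$, $\delta_{TF}^k\underline u_T=\delta_{TF}^k\underline u_T'$, $\delta_T^k\underline v_T=\delta_T^k\underline v_T'$, $\delta_{TF}^k\underline v_T=\delta_{TF}^k\underline v_T'$ for all $F\in\mathcal F_T$. Then for all $\underline u_T,\underline v_T\in\underline U_T^k$, $$\mathrm s_T(\underline u_T,\underline v_T)=\mathrm s_T\big((0,\Delta_{\partial T}^k\underline u_T),(0,\Delta_{\partial T}^k\underline v_T)\big).$$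
   Context: $T$ is an element (open polytope) of a polytopal mesh of a bounded polyhedral domain $\Omega\subset\mathbb R^d$, $\mathcal F_T$ the set of its (planar) faces, $\vec n_{TF}$ the unit normal to $F$ pointing out of $T$, $h_T,h_F$ diameters. $\mathbb P^l(X)$: polynomials of total degree $\le l$ on $X$; $(\cdot,\cdot)_X$, $\|\cdot\|_X$: $L^2(X)$ product and norm; $\pi_X^{0,l}$: $L^2(X)$-orthogonal projector onto $\mathbb P^l(X)$. $\underline U_T^k:=\mathbb P^k(T)\times\prod_{F\in\mathcal F_T}\mathbb P^k(F)$ with elements $\underline v_T=(v_T,(v_F)_{F\in\mathcal F_T})$; $\|\underline v_T\|_{1,T}^2:=\|\nabla v_T\|_T^2+\sum_Fh_F^{-1}\|v_F-v_T\|_F^2$; $\underline I_T^kv:=(\pi_T^{0,k}v,(\pi_F^{0,k}v|_F)_F)$. $p_T^{k+1}:\underline U_T^k\to\mathbb P^{k+1}(T)$ is defined by $(\nabla p_T^{k+1}\underline v_T,\nabla w)_T=-(v_T,\Delta w)_T+\sum_F(v_F,\nabla w\cdot\vec n_{TF})_F$ for all $w\in\mathbb P^{k+1}(T)$ and $(p_T^{k+1}\underline v_T-v_T,1)_T=0$. $\mathrm a_T(\underline u_T,\underline v_T):=(\nabla p_T^{k+1}\underline u_T,\nabla p_T^{k+1}\underline v_T)_T+\mathrm s_T(\underline u_T,\underline v_T)$. (S1) $\mathrm s_T$ symmetric positive semidefinite; (S2) there is $\eta>0$ with $\eta^{-1}\|\underline v_T\|_{1,T}^2\le\mathrm a_T(\underline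 v_T,\underline v_T)\le\eta\|\underline v_T\|_{1,T}^2$ for all $\underline v_T$; (S3) $\mathrm s_T(\underline I_T^kw,\underline v_T)=0$ for all $w\in\mathbb P^{k+1}(T)$, $\underline v_T\in\underline U_T^k$. Residuals: $\delta_T^k\underline v_T:=\pi_T^{0,k}(p_T^{k+1}\underline v_T-v_T)$ and $\delta_{TF}^k\underline v_T:=\pi_F^{0,k}(p_T^{k+1}\underline v_T-v_F)$ for $F\in\mathcal F_T$. Boundary difference operator $\Delta_{\partial T}^k:\underline U_T^k\to\prod_{F\in\mathcal F_T}\mathbb P^k(F)$, $\Delta_{\partial T}^k\underline v_T:=(v_F-v_T|_F)_{F\in\mathcal F_T}$; $(0,\Delta_{\partial T}^k\underline v_T)$ denotes the element of $\underline U_T^k$ with element component $0$ and face components $v_F-v_T|_F$. *)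

theory Defs
  imports "HOL-Analysis.Analysis"
begin

definition exps :: "nat \<Rightarrow> ('a::euclidean_space \<Rightarrow> nat) set" where
  "exps l = {\<alpha>. (\<forall>b. b \<notin> Basis \<longrightarrow> \<alpha> b = 0) \<and> (\<Sum>b\<in>Basis. \<alpha> b) \<le> l}"

definition mono :: "('a::euclidean_space \<Rightarrow> nat) \<Rightarrow> 'a \<Rightarrow> real" where
  "mono \<alpha> x = (\<Prod>b\<in>Basis. (x \<bullet> b) ^ \<alpha> b)"

text \<open>Global polynomial functions of total degree at most l (P^l(T) for open nonempty T,
  represented by the unique global polynomial).\<close>
definition polys :: "nat \<Rightarrow> ('a::euclidean_space \<Rightarrow> real) set" where
  "polys l = {f. \<exists>c. f = (\<lambda>x. \<Sum>\<alpha>\<in>exps l. c \<alpha> * mono \<alpha> x)}"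

text \<open>P^l(F): restrictions of polynomials to F, canonically extended by zero outside F.\<close>
definition polysF :: "'a::euclidean_space set \<Rightarrow> nat \<Rightarrow> ('a \<Rightarrow> real) set" where
  "polysF F l = {(\<lambda>x. if x \<in> F then p x else 0) | p. p \<in> polys l}"

definition pd :: "'a::euclidean_space \<Rightarrow> ('a \<Rightarrow> real) \<Rightarrow> 'a \<Rightarrow> real" where
  "pd b f x = deriv (\<lambda>t. f (x + t *\<^sub>R b)) 0"

definition grad :: "('a::euclidean_space \<Rightarrow> real) \<Rightarrow> 'a \<Rightarrow> 'a" where
  "grad f x = (\<Sum>b\<in>Basis. pd b f x *\<^sub>R b)"

definition lap :: "('a::euclidean_space \<Rightarrow> real) \<Rightarrow> 'a \<Rightarrow> real" where
  "lap f x = (\<Sum>b\<in>Basis. pd b (pd b f) x)"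

definition outward_unit_normal :: "'a::euclidean_space set \<Rightarrow> 'a set \<Rightarrow> 'a \<Rightarrow> bool" where
  "outward_unit_normal T F n \<longleftrightarrow> norm n = 1 \<and> (\<forall>x\<in>F. \<forall>y\<in>F. n \<bullet> (x - y) = 0) \<and>
     (\<forall>x\<in>F. \<exists>e>0. \<forall>t. 0 < t \<and> t < e \<longrightarrow> x + t *\<^sub>R n \<notin> T \<and> x - t *\<^sub>R n \<in> T)"

definition normal :: "'a::euclidean_space set \<Rightarrow> 'a set \<Rightarrow> 'a" where
  "normal T F = (THE n. outward_unit_normal T F n)"

definition polytopal_element :: "'a::euclidean_space set \<Rightarrow> 'a set set \<Rightarrow> bool" where
  "polytopal_element T FT \<longleftrightarrow>
     T \<noteq> {} \<and> connected T \<and>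
     (\<exists>P. finite P \<and> (\<forall>Q\<in>P. polytope Q) \<and> T = interior (\<Union>P)) \<and>
     finite FT \<and> frontier T = closure (\<Union>FT) \<and>
     (\<forall>F\<in>FT. \<forall>G\<in>FT. F \<noteq> G \<longrightarrow> F \<inter> G = {}) \<and>
     (\<forall>F\<in>FT. F \<noteq> {} \<and> connected F \<and> F \<subseteq> frontier T \<and>
        aff_dim F = int DIM('a) - 1 \<and>
        openin (top_of_set (affine hull F)) F \<and>
        (\<exists>n. outward_unit_normal T F n))"

definition ipT :: "'a::euclidean_space set \<Rightarrow> ('a \<Rightarrow> real) \<Rightarrow> ('a \<Rightarrow> real) \<Rightarrow> real" where
  "ipT T f g = integral T (\<lambda>x. f x * g x)"

text \<open>Integral over a planar face F with respect to the (d-1)-dimensional surface measure: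
  the integral of the normal-constant extension over the unit-height prism F + [0,1] n.\<close>
definition face_integral :: "'a::euclidean_space set \<Rightarrow> 'a set \<Rightarrow> ('a \<Rightarrow> real) \<Rightarrow> real" where
  "face_integral T F g =
     (let n = normal T F; a = (SOME x. x \<in> F) in
      integral {x + t *\<^sub>R n | x t. x \<in> F \<and> t \<in> {0..1}}
               (\<lambda>y. g (y - ((y - a) \<bullet> n) *\<^sub>R n)))"

definition ipF :: "'a::euclidean_space set \<Rightarrow> 'a set \<Rightarrow> ('a \<Rightarrow> real) \<Rightarrow> ('a \<Rightarrow> real) \<Rightarrow> real" where
  "ipF T F f g = face_integral T F (\<lambda>x. f x * g x)"

definition projT :: "'a::euclidean_space set \<Rightarrow> nat \<Rightarrow> ('a \<Rightarrow> real) \<Rightarrow> ('a \<Rightarrow> real)" where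
  "projT T l f = (THE g. g \<in> polys l \<and> (\<forall>q\<in>polys l. ipT T (\<lambda>x. f x - g x) q = 0))"

definition projF :: "'a::euclidean_space set \<Rightarrow> 'a set \<Rightarrow> nat \<Rightarrow> ('a \<Rightarrow> real) \<Rightarrow> ('a \<Rightarrow> real)" where
  "projF T F l f = (THE g. g \<in> polysF F l \<and> (\<forall>q\<in>polysF F l. ipF T F (\<lambda>x. f x - g x) q = 0))"

type_synonym 'a hho = "('a \<Rightarrow> real) \<times> ('a set \<Rightarrow> 'a \<Rightarrow> real)"

definition UT :: "'a::euclidean_space set set \<Rightarrow> nat \<Rightarrow> 'a hho set" where
  "UT FT k = {(vT, vF). vT \<in> polys k \<and> (\<forall>F\<in>FT. vF F \<in> polysF F k) \<and>
                        (\<forall>F. F \<notin> FT \<longrightarrow> vF F = (\<lambda>_. 0))}"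

definition hho_add :: "'a hho \<Rightarrow> 'a hho \<Rightarrow> 'a hho" where
  "hho_add u v = ((\<lambda>x. fst u x + fst v x), (\<lambda>F x. snd u F x + snd v F x))"

definition hho_scale :: "real \<Rightarrow> 'a hho \<Rightarrow> 'a hho" where
  "hho_scale c v = ((\<lambda>x. c * fst v x), (\<lambda>F x. c * snd v F x))"

definition pT :: "'a::euclidean_space set \<Rightarrow> 'a set set \<Rightarrow> nat \<Rightarrow> 'a hho \<Rightarrow> ('a \<Rightarrow> real)" where
  "pT T FT k v = (THE r. r \<in> polys (Suc k) \<and>
      (\<forall>w\<in>polys (Suc k).
         integral T (\<lambda>x. grad r x \<bullet> grad w x) =
           - ipT T (fst v) (lap w) + (\<Sum>F\<in>FT. ipF T F (snd v F) (\<lambda>x. grad w x \<bullet> normal T F))) \<and>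
      integral T (\<lambda>x. r x - fst v x) = 0)"

definition resT :: "'a::euclidean_space set \<Rightarrow> 'a set set \<Rightarrow> nat \<Rightarrow> 'a hho \<Rightarrow> ('a \<Rightarrow> real)" where
  "resT T FT k v = projT T k (\<lambda>x. pT T FT k v x - fst v x)"

definition resTF :: "'a::euclidean_space set \<Rightarrow> 'a set set \<Rightarrow> nat \<Rightarrow> 'a set \<Rightarrow> 'a hho \<Rightarrow> ('a \<Rightarrow> real)" where
  "resTF T FT k F v = projF T F k (\<lambda>x. pT T FT k v x - snd v F x)"

definition interpT :: "'a::euclidean_space set \<Rightarrow> 'a set set \<Rightarrow> nat \<Rightarrow> ('a \<Rightarrow> real) \<Rightarrow> 'a hho" where
  "interpT T FT k w = (projT T k w, (\<lambda>F. if F \<in> FT then projF T F k w else (\<lambda>_. 0)))"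

text \<open>(0, Delta_dT v): zero element component, face components v_F - v_T|_F.\<close>
definition bdiff :: "'a::euclidean_space set set \<Rightarrow> 'a hho \<Rightarrow> 'a hho" where
  "bdiff FT v = ((\<lambda>_. 0), (\<lambda>F. if F \<in> FT then (\<lambda>x. if x \<in> F then snd v F x - fst v x else 0)
                               else (\<lambda>_. 0)))"

definition norm1T_sq :: "'a::euclidean_space set \<Rightarrow> 'a set set \<Rightarrow> 'a hho \<Rightarrow> real" where
  "norm1T_sq T FT v = integral T (\<lambda>x. grad (fst v) x \<bullet> grad (fst v) x) +
     (\<Sum>F\<in>FT. (1 / diameter F) * ipF T F (\<lambda>x. snd v F x - fst v x) (\<lambda>x. snd v F x - fst v x))"

definition aT :: "'a::euclidean_space set \<Rightarrow> 'a set set \<Rightarrow> nat \<Rightarrow> ('a hho \<Rightarrow> 'a hho \<Rightarrow> real)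
                   \<Rightarrow> 'a hho \<Rightarrow> 'a hho \<Rightarrow> real" where
  "aT T FT k s u v = integral T (\<lambda>x. grad (pT T FT k u) x \<bullet> grad (pT T FT k v) x) + s u v"

definition bilinear_on :: "'a hho set \<Rightarrow> ('a hho \<Rightarrow> 'a hho \<Rightarrow> real) \<Rightarrow> bool" where
  "bilinear_on U s \<longleftrightarrow>
     (\<forall>u\<in>U. \<forall>u'\<in>U. \<forall>v\<in>U. \<forall>a b. s (hho_add (hho_scale a u) (hho_scale b u')) v = a * s u v + b * s u' v) \<and>
     (\<forall>u\<in>U. \<forall>v\<in>U. \<forall>v'\<in>U. \<forall>a b. s u (hho_add (hho_scale a v) (hho_scale b v')) = a * s u v + b * s u v')"

end

theory Submission
  imports Defs "HOL-Computational_Algebra.Polynomial"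
begin

lemma finite_exps: "finite (exps l :: ('a::euclidean_space \<Rightarrow> nat) set)"
proof -
  have "(exps l :: ('a \<Rightarrow> nat) set) \<subseteq> (\<lambda>f b. if b \<in> Basis then f b else 0) ` (Basis \<rightarrow>\<^sub>E {..l})"
  proof
    fix \<alpha> :: "'a \<Rightarrow> nat" assume a: "\<alpha> \<in> exps l"
    have "\<alpha> = (\<lambda>b. if b \<in> Basis then restrict \<alpha> Basis b else 0)"
      using a by (auto simp: exps_def)
    moreover have "restrict \<alpha> Basis \<in> Basis \<rightarrow>\<^sub>E {..l}"
    proof -
      have "\<And>b. b \<in> Basis \<Longrightarrow> \<alpha> b \<le> l"
        using a unfolding exps_def
        by (metis (no_types, lifting) finite_Basis member_le_sum mem_Collect_eq order_trans zero_le)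
      then show ?thesis by (simp add: restrict_PiE_iff)
    qed
    ultimately show "\<alpha> \<in> (\<lambda>f b. if b \<in> Basis then f b else 0) ` (Basis \<rightarrow>\<^sub>E {..l})"
      by (rule image_eqI)
  qed
  moreover have "finite (Basis \<rightarrow>\<^sub>E {..l} :: ('a \<Rightarrow> nat) set)"
    by (intro finite_PiE) auto
  ultimately show ?thesis using finite_subset by blast
qed

lemma exps_mono: "exps l \<subseteq> exps (Suc l)"
  by (auto simp: exps_def)

lemma polys_Suc: "p \<in> polys l \<Longrightarrow> p \<in> polys (Suc l)"
proof -
  assume "p \<in> polys l"
  then obtain c where c: "p = (\<lambda>x. \<Sum>\<alpha>\<in>exps l. c \<alpha> * mono \<alpha> x)" by (auto simp: polys_def)
  define c' where "c' \<alpha> = (if \<alpha> \<in> exps l then c \<alpha> else 0)" for \<alpha>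
  have "\<And>x. (\<Sum>\<alpha>\<in>exps l. c \<alpha> * mono \<alpha> x) = (\<Sum>\<alpha>\<in>exps (Suc l). c' \<alpha> * mono \<alpha> x)"
    by (rule sum.mono_neutral_cong_left) (auto simp: finite_exps exps_mono c'_def)
  then show ?thesis unfolding polys_def c by blast
qed

lemma polys_diff: "p \<in> polys l \<Longrightarrow> q \<in> polys l \<Longrightarrow> (\<lambda>x. p x - q x) \<in> polys l"
proof -
  assume "p \<in> polys l" "q \<in> polys l"
  then obtain c d where c: "p = (\<lambda>x. \<Sum>\<alpha>\<in>exps l. c \<alpha> * mono \<alpha> x)"
    and d: "q = (\<lambda>x. \<Sum>\<alpha>\<in>exps l. d \<alpha> * mono \<alpha> x)" by (auto simp: polys_def)
  have "(\<lambda>x. p x - q x) = (\<lambda>x. \<Sum>\<alpha>\<in>exps l. (c \<alpha> - d \<alpha>) * mono \<alpha> x)"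
    by (simp add: c d sum_subtractf[symmetric] left_diff_distrib)
  then show ?thesis unfolding polys_def mem_Collect_eq by (rule exI[of _ "\<lambda>\<alpha>. c \<alpha> - d \<alpha>"])
qed

lemma polys_zero: "(\<lambda>x. 0) \<in> polys l"
  unfolding polys_def by (rule CollectI, rule exI[of _ "\<lambda>_. 0"]) simp

lemma polys_cont: "p \<in> polys l \<Longrightarrow> continuous_on UNIV p"
  unfolding polys_def mono_def by (auto intro!: continuous_intros)

lemma polys_line: "p \<in> polys l \<Longrightarrow> \<exists>P. \<forall>t. p (x + t *\<^sub>R v) = poly P t"
proof -
  assume "p \<in> polys l"
  then obtain c where c: "p = (\<lambda>x. \<Sum>\<alpha>\<in>exps l. c \<alpha> * mono \<alpha> x)" by (auto simp: polys_def)
  define P where "P = (\<Sum>\<alpha>\<in>exps l. smult (c \<alpha>) (\<Prod>b\<in>Basis. [: x \<bullet> b, v \<bullet> b :] ^ \<alpha> b))"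
  have "\<forall>t. p (x + t *\<^sub>R v) = poly P t"
    by (simp add: c P_def mono_def poly_sum poly_prod inner_add_left algebra_simps)
  then show ?thesis by blast
qed

lemma polys_zero_open:
  assumes p: "p \<in> polys l" and S: "open S" "x0 \<in> S" and z: "\<forall>x\<in>S. p x = 0"
  shows "p y = 0"
proof -
  obtain r where r: "r > 0" "ball x0 r \<subseteq> S" using S openE by blast
  obtain P where P: "\<forall>t. p (x0 + t *\<^sub>R (y - x0)) = poly P t" using polys_line[OF p] by blast
  define e where "e = r / (norm (y - x0) + 1)"
  have e: "e > 0" using r by (auto simp: e_def intro!: divide_pos_pos add_nonneg_pos)
  have "{0<..<e} \<subseteq> {t. poly P t = 0}"
  proof
    fix t assume t: "t \<in> {0<..<e}"
    have n1: "0 < norm (y - x0) + 1" using norm_ge_zero[of "y - x0"] by linarith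
    have "norm (t *\<^sub>R (y - x0)) = t * norm (y - x0)" using t by simp
    also have "\<dots> \<le> t * (norm (y - x0) + 1)" using t by (simp add: mult_left_mono)
    also have "\<dots> < e * (norm (y - x0) + 1)" using t n1 by simp
    also have "\<dots> = r" using n1 by (simp add: e_def)
    finally have "norm (t *\<^sub>R (y - x0)) < r" .
    then have "x0 + t *\<^sub>R (y - x0) \<in> ball x0 r" by (simp add: dist_norm)
    then have "p (x0 + t *\<^sub>R (y - x0)) = 0" using r z by blast
    then show "t \<in> {t. poly P t = 0}" using P by simp
  qed
  then have "infinite {t. poly P t = 0}"
    using e infinite_Ioo[of 0 e] finite_subset by blast
  then have "P = 0" using poly_roots_finite by blast
  then show "p y = 0" using P[rule_format, of 1] by simp
qed

lemma cont_integrable: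
  fixes f :: "'a::euclidean_space \<Rightarrow> real"
  assumes "continuous_on UNIV f" "bounded S" "S \<in> sets lebesgue"
  shows "f integrable_on S"
proof -
  have "compact (closure S)" using assms(2) by (simp add: compact_closure)
  then have "compact (f ` closure S)"
    by (meson assms(1) compact_continuous_image continuous_on_subset subset_UNIV)
  then obtain M where M: "\<forall>y\<in>f ` closure S. norm y \<le> M"
    using compact_imp_bounded bounded_iff by blast
  have "f absolutely_integrable_on S"
  proof (rule measurable_bounded_by_integrable_imp_absolutely_integrable[where g="\<lambda>_. M"])
    show "f \<in> borel_measurable (lebesgue_on S)"
      by (meson assms(1) assms(3) continuous_imp_measurable_on_sets_lebesgue continuous_on_subset subset_UNIV)
    show "(\<lambda>_. M) integrable_on S"
      by (simp add: assms bounded_set_imp_lmeasurable integrable_on_const)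
    show "\<And>x. x \<in> S \<Longrightarrow> norm (f x) \<le> M" using M closure_subset by blast
  qed (use assms in auto)
  then show ?thesis using set_lebesgue_integral_eq_integral(1) by blast
qed

lemma zero_from_integral:
  fixes f :: "'a::euclidean_space \<Rightarrow> real"
  assumes f: "continuous_on UNIV f" "\<forall>x. 0 \<le> f x" and S: "f integrable_on S" "integral S f = 0"
    and V: "open V" "V \<subseteq> S" "x0 \<in> V"
  shows "f x0 = 0"
proof -
  obtain a b where ab: "cbox a b \<subseteq> V" "x0 \<in> box a b"
    using open_contains_cbox[OF V(1) V(3)] by metis
  have ci: "f integrable_on cbox a b"
    by (meson f(1) integrable_continuous continuous_on_subset subset_UNIV)
  have "integral (cbox a b) f \<le> integral S f"
    by (rule integral_subset_le) (use ab V ci S f in auto)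
  moreover have "0 \<le> integral (cbox a b) f" using ci f by (simp add: integral_nonneg)
  ultimately have "integral (cbox a b) f = 0" using S by linarith
  then have "(f has_integral 0) (cbox a b)" using ci by (metis has_integral_integral)
  moreover have "continuous_on (cbox a b) f" using f(1) continuous_on_subset by blast
  moreover have "box a b \<noteq> {}" "x0 \<in> cbox a b" using ab box_subset_cbox by auto
  ultimately show ?thesis using has_integral_0_cbox_imp_0[of a b f x0] f(2) by blast
qed

lemma projT_poly:
  assumes p: "p \<in> polys l" and T: "open T" "bounded T" "T \<noteq> {}"
  shows "projT T l p = p"
  unfolding projT_def
proof (rule the_equality)
  show "p \<in> polys l \<and> (\<forall>q\<in>polys l. ipT T (\<lambda>x. p x - p x) q = 0)"
    using p by (simp add: ipT_def)
next
  fix g assume g: "g \<in> polys l \<and> (\<forall>q\<in>polys l. ipT T (\<lambda>x. p x - g x) q = 0)"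
  define h where "h = (\<lambda>x. p x - g x)"
  have h: "h \<in> polys l" using g p polys_diff h_def by blast
  have hc: "continuous_on UNIV (\<lambda>x. h x * h x)"
    using polys_cont[OF h] by (intro continuous_intros)
  have i0: "integral T (\<lambda>x. h x * h x) = 0" using g h by (simp add: ipT_def h_def)
  have hi: "(\<lambda>x. h x * h x) integrable_on T"
    by (rule cont_integrable[OF hc T(2)]) (simp add: T(1) borel_open)
  have z: "\<forall>x\<in>T. h x = 0"
  proof
    fix x0 assume "x0 \<in> T"
    then have "h x0 * h x0 = 0"
      by (intro zero_from_integral[OF hc _ hi i0 T(1) order_refl]) auto
    then show "h x0 = 0" by simp
  qed
  obtain x0 where "x0 \<in> T" using T by blast
  have "\<And>y. h y = 0" using polys_zero_open[OF h T(1) \<open>x0 \<in> T\<close> z] .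
  then show "g = p" unfolding h_def by (metis eq_iff_diff_eq_0 ext)
qed

lemma hull_hyper:
  fixes F :: "'a::euclidean_space set"
  assumes n: "norm n = 1" "\<forall>x\<in>F. \<forall>y\<in>F. n \<bullet> (x - y) = 0" and a: "a \<in> F"
    and d: "aff_dim F = int DIM('a) - 1"
  shows "affine hull F = {z. n \<bullet> z = n \<bullet> a}"
proof (rule affine_dim_equal)
  show "affine (affine hull F)" by simp
  show "affine {z. n \<bullet> z = n \<bullet> a}" by (rule affine_hyperplane)
  show "affine hull F \<noteq> {}" using a hull_subset[of F affine] by blast
  have "F \<subseteq> {z. n \<bullet> z = n \<bullet> a}"
  proof
    fix x assume "x \<in> F"
    then have "n \<bullet> (x - a) = 0" using n(2) a by blast
    then show "x \<in> {z. n \<bullet> z = n \<bullet> a}" by (simp add: inner_diff_right)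
  qed
  then show "affine hull F \<subseteq> {z. n \<bullet> z = n \<bullet> a}"
    by (rule hull_minimal) (rule affine_hyperplane)
  have "n \<noteq> 0" using n(1) by auto
  then show "aff_dim (affine hull F) = aff_dim {z. n \<bullet> z = n \<bullet> a}"
    using d by simp
qed
lemma normal_unique:
  fixes F :: "'a::euclidean_space set"
  assumes ne: "F \<noteq> {}" and d: "aff_dim F = int DIM('a) - 1"
    and o1: "outward_unit_normal T F n1" and o2: "outward_unit_normal T F n2"
  shows "n1 = n2"
proof -
  obtain a where a: "a \<in> F" using ne by blast
  have n1: "norm n1 = 1" "\<forall>x\<in>F. \<forall>y\<in>F. n1 \<bullet> (x - y) = 0"
    using o1 unfolding outward_unit_normal_def by blast+
  have n2: "norm n2 = 1" "\<forall>x\<in>F. \<forall>y\<in>F. n2 \<bullet> (x - y) = 0"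
    using o2 unfolding outward_unit_normal_def by blast+
  have H1: "affine hull F = {z. n1 \<bullet> z = n1 \<bullet> a}" by (rule hull_hyper[OF n1 a d])
  have "F \<subseteq> {z. n2 \<bullet> z = n2 \<bullet> a}"
  proof
    fix x assume "x \<in> F"
    then have "n2 \<bullet> (x - a) = 0" using n2(2) a by blast
    then show "x \<in> {z. n2 \<bullet> z = n2 \<bullet> a}" by (simp add: inner_diff_right)
  qed
  then have H2: "affine hull F \<subseteq> {z. n2 \<bullet> z = n2 \<bullet> a}"
    by (rule hull_minimal) (rule affine_hyperplane)
  have nn1: "n1 \<bullet> n1 = 1" using n1(1) by (simp add: norm_eq_1)
  have nn2: "n2 \<bullet> n2 = 1" using n2(1) by (simp add: norm_eq_1)
  define c where "c = n2 \<bullet> n1"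
  define v where "v = n2 - c *\<^sub>R n1"
  have "v \<bullet> n1 = 0" using nn1 by (simp add: v_def c_def inner_diff_left)
  then have "a + v \<in> affine hull F" unfolding H1 by (simp add: inner_add_right inner_commute)
  then have "n2 \<bullet> (a + v) = n2 \<bullet> a" using H2 by blast
  then have "n2 \<bullet> v = 0" by (simp add: inner_add_right)
  then have "v \<bullet> v = 0" using \<open>v \<bullet> n1 = 0\<close>
    by (simp add: v_def inner_diff_left inner_commute)
  then have "v = 0" by simp
  then have n2c: "n2 = c *\<^sub>R n1" by (simp add: v_def)
  then have "c * c = 1" using nn2 nn1 by simp
  then have "c = 1 \<or> c = -1" using square_eq_1_iff by blast
  moreover have "c \<noteq> -1"
  proof
    assume "c = -1"
    then have n2m: "n2 = - n1" using n2c by simp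
    obtain e1 where e1: "e1 > 0" "\<forall>t. 0 < t \<and> t < e1 \<longrightarrow> a + t *\<^sub>R n1 \<notin> T"
      using o1 a unfolding outward_unit_normal_def by blast
    obtain e2 where e2: "e2 > 0" "\<forall>t. 0 < t \<and> t < e2 \<longrightarrow> a - t *\<^sub>R n2 \<in> T"
      using o2 a unfolding outward_unit_normal_def by blast
    define t where "t = min e1 e2 / 2"
    have "0 < t" "t < e1" "t < e2" using e1 e2 by (auto simp: t_def)
    then have "a + t *\<^sub>R n1 \<notin> T" "a - t *\<^sub>R n2 \<in> T" using e1 e2 by auto
    then show False using n2m by simp
  qed
  ultimately have "c = 1" by blast
  then show ?thesis using n2c by simp
qed


lemma face_props:
  fixes T :: "'a::euclidean_space set"
  assumes el: "polytopal_element T FT" and F: "F \<in> FT"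
  shows "F \<noteq> {}" "F \<subseteq> frontier T" "aff_dim F = int DIM('a) - 1"
    "openin (top_of_set (affine hull F)) F" "\<exists>n. outward_unit_normal T F n"
proof -
  have "\<forall>F\<in>FT. F \<noteq> {} \<and> connected F \<and> F \<subseteq> frontier T \<and>
        aff_dim F = int DIM('a) - 1 \<and>
        openin (top_of_set (affine hull F)) F \<and>
        (\<exists>n. outward_unit_normal T F n)"
    using el unfolding polytopal_element_def by (elim conjE)
  then have "F \<noteq> {} \<and> connected F \<and> F \<subseteq> frontier T \<and>
        aff_dim F = int DIM('a) - 1 \<and>
        openin (top_of_set (affine hull F)) F \<and>
        (\<exists>n. outward_unit_normal T F n)" using F by (rule bspec)
  then show "F \<noteq> {}" "F \<subseteq> frontier T" "aff_dim F = int DIM('a) - 1"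
    "openin (top_of_set (affine hull F)) F" "\<exists>n. outward_unit_normal T F n" by simp_all
qed

lemma elem_props:
  fixes T :: "'a::euclidean_space set"
  assumes el: "polytopal_element T FT"
  shows "open T" "bounded T" "T \<noteq> {}"
proof -
  have ne: "T \<noteq> {}" using el unfolding polytopal_element_def by (elim conjE)
  have "\<exists>P. finite P \<and> (\<forall>Q\<in>P. polytope Q) \<and> T = interior (\<Union>P)"
    using el unfolding polytopal_element_def by (elim conjE)
  then obtain P where P: "finite P" "\<forall>Q\<in>P. polytope Q" "T = interior (\<Union>P)" by blast
  have "bounded (\<Union>P)" using P by (intro bounded_Union) (auto intro: compact_imp_bounded polytope_imp_compact)
  then show "bounded T" using P(3) by (simp add: bounded_interior)
  show "open T" using P(3) by simp
  show "T \<noteq> {}" by (rule ne)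
qed

lemma normal_ok:
  assumes el: "polytopal_element T FT" and F: "F \<in> FT"
  shows "outward_unit_normal T F (normal T F)"
proof -
  have "\<exists>!n. outward_unit_normal T F n"
    using face_props(5)[OF el F] normal_unique[OF face_props(1,3)[OF el F]] by blast
  then show ?thesis unfolding normal_def by (rule theI')
qed
lemma lebesgue_of_borel: "S \<in> sets borel \<Longrightarrow> S \<in> sets lebesgue"
  by (metis sets_completionI_sets sets_lborel)

lemma projF_poly:
  fixes T F :: "'a::euclidean_space set"
  assumes p: "p \<in> polys l" and ne: "F \<noteq> {}" and bF: "bounded F"
    and d: "aff_dim F = int DIM('a) - 1"
    and op: "openin (top_of_set (affine hull F)) F"
    and on: "outward_unit_normal T F (normal T F)"
  shows "projF T F l p = (\<lambda>x. if x \<in> F then p x else 0)"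
  unfolding projF_def
proof (rule the_equality)
  show "(\<lambda>x. if x \<in> F then p x else 0) \<in> polysF F l \<and>
    (\<forall>q\<in>polysF F l. ipF T F (\<lambda>x. p x - (if x \<in> F then p x else 0)) q = 0)"
  proof
    show "(\<lambda>x. if x \<in> F then p x else 0) \<in> polysF F l" unfolding polysF_def using p by blast
    show "\<forall>q\<in>polysF F l. ipF T F (\<lambda>x. p x - (if x \<in> F then p x else 0)) q = 0"
    proof
      fix q assume "q \<in> polysF F l"
      then obtain r where r: "q = (\<lambda>x. if x \<in> F then r x else 0)" unfolding polysF_def by blast
      have "(\<lambda>x. (p x - (if x \<in> F then p x else 0)) * q x) = (\<lambda>x. 0)" by (auto simp: r)
      then show "ipF T F (\<lambda>x. p x - (if x \<in> F then p x else 0)) q = 0"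
        by (simp add: ipF_def face_integral_def Let_def)
    qed
  qed
next
  fix g assume g: "g \<in> polysF F l \<and> (\<forall>q\<in>polysF F l. ipF T F (\<lambda>x. p x - g x) q = 0)"
  then obtain p2 where p2: "p2 \<in> polys l" and gdef: "g = (\<lambda>x. if x \<in> F then p2 x else 0)"
    unfolding polysF_def by blast
  define h where "h = (\<lambda>x. p x - p2 x)"
  have h: "h \<in> polys l" using p p2 polys_diff h_def by blast
  define q where "q = (\<lambda>x. if x \<in> F then h x else 0)"
  have "q \<in> polysF F l" unfolding polysF_def q_def using h by blast
  then have ip0: "ipF T F (\<lambda>x. p x - g x) q = 0" using g by blast
  define n where "n = normal T F"
  define a where "a = (SOME x. x \<in> F)"
  define pr where "pr = (\<lambda>y. y - ((y - a) \<bullet> n) *\<^sub>R n)"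
  define P where "P = {x + t *\<^sub>R n | x t. x \<in> F \<and> t \<in> {0..1::real}}"
  have aF: "a \<in> F" unfolding a_def using ne by (simp add: some_in_eq)
  have nn: "n \<bullet> n = 1" and nnorm: "norm n = 1" using on unfolding n_def outward_unit_normal_def
    by (simp_all add: norm_eq_1)
  have orth: "\<And>x. x \<in> F \<Longrightarrow> n \<bullet> (x - a) = 0"
  proof -
    fix x assume "x \<in> F"
    have "\<forall>x\<in>F. \<forall>y\<in>F. n \<bullet> (x - y) = 0" using on unfolding n_def outward_unit_normal_def by blast
    then show "n \<bullet> (x - a) = 0" using \<open>x \<in> F\<close> aF by blast
  qed
  have Pchar: "\<And>y. y \<in> P \<longleftrightarrow> pr y \<in> F \<and> (y - a) \<bullet> n \<in> {0..1}"
  proof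
    fix y assume "y \<in> P"
    then obtain x t where xt: "y = x + t *\<^sub>R n" "x \<in> F" "t \<in> {0..1::real}" unfolding P_def by blast
    have "(y - a) \<bullet> n = n \<bullet> (x - a) + t * (n \<bullet> n)"
      by (simp add: xt inner_diff_left inner_add_left inner_commute algebra_simps)
    then have t: "(y - a) \<bullet> n = t" using orth[OF xt(2)] nn by simp
    then have "pr y = x" by (simp add: pr_def xt)
    then show "pr y \<in> F \<and> (y - a) \<bullet> n \<in> {0..1}" using t xt by simp
  next
    fix y assume "pr y \<in> F \<and> (y - a) \<bullet> n \<in> {0..1}"
    moreover have "y = pr y + ((y - a) \<bullet> n) *\<^sub>R n" by (simp add: pr_def)
    ultimately show "y \<in> P" unfolding P_def by blast
  qed
  have prc: "continuous_on UNIV pr" unfolding pr_def by (intro continuous_intros)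
  have prca: "\<And>x. continuous (at x) pr" unfolding pr_def by (intro continuous_intros)
  have H: "affine hull F = {z. n \<bullet> z = n \<bullet> a}"
  proof (rule hull_hyper[OF nnorm _ aF d])
    show "\<forall>x\<in>F. \<forall>y\<in>F. n \<bullet> (x - y) = 0" using on unfolding n_def outward_unit_normal_def by blast
  qed
  obtain U where U: "open U" "F = affine hull F \<inter> U" using op openin_open by blast
  have Peq: "P = pr -` U \<inter> pr -` (affine hull F) \<inter> (\<lambda>y. (y - a) \<bullet> n) -` {0..1}"
    using Pchar U(2) by blast
  have Pmeas: "P \<in> sets lebesgue"
  proof -
    have "open (pr -` U)" by (rule continuous_open_vimage[OF U(1) prca])
    moreover have "closed (pr -` (affine hull F))"
      by (rule continuous_closed_vimage[OF _ prca]) simp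
    moreover have "closed ((\<lambda>y. (y - a) \<bullet> n) -` {0..1})"
      by (rule continuous_closed_vimage) (auto intro!: continuous_intros)
    ultimately have "P \<in> sets borel" unfolding Peq
      by (intro sets.Int borel_open borel_closed) auto
    then show ?thesis by (rule lebesgue_of_borel)
  qed
  have Pbd: "bounded P"
  proof -
    obtain B where B: "\<forall>x\<in>F. norm x \<le> B" using bF bounded_iff by blast
    have "\<forall>y\<in>P. norm y \<le> B + 1"
    proof
      fix y assume "y \<in> P"
      then obtain x t where xt: "y = x + t *\<^sub>R n" "x \<in> F" "t \<in> {0..1::real}" unfolding P_def by blast
      have "norm y \<le> norm x + norm (t *\<^sub>R n)" unfolding xt(1) by (rule norm_triangle_ineq)
      also have "norm (t *\<^sub>R n) = \<bar>t\<bar>" using nnorm by simp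
      finally show "norm y \<le> B + 1" using B xt by auto
    qed
    then show ?thesis unfolding bounded_iff by blast
  qed
  define f where "f = (\<lambda>y. h (pr y) * h (pr y))"
  have hc: "continuous_on UNIV h" by (rule polys_cont[OF h])
  have hpc: "continuous_on UNIV (\<lambda>y. h (pr y))"
    using continuous_on_compose[OF prc continuous_on_subset[OF hc]] by (simp add: o_def)
  have fc: "continuous_on UNIV f" unfolding f_def using hpc by (intro continuous_intros)
  have fi: "f integrable_on P" by (rule cont_integrable[OF fc Pbd Pmeas])
  have I0: "integral P (\<lambda>y. (p (pr y) - g (pr y)) * q (pr y)) = 0"
    using ip0 by (simp add: ipF_def face_integral_def Let_def P_def pr_def n_def a_def)
  have "integral P f = integral P (\<lambda>y. (p (pr y) - g (pr y)) * q (pr y))"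
  proof (rule integral_cong)
    fix y assume "y \<in> P"
    then have "pr y \<in> F" using Pchar by blast
    then show "f y = (p (pr y) - g (pr y)) * q (pr y)" by (simp add: f_def gdef q_def h_def)
  qed
  then have fI0: "integral P f = 0" using I0 by simp
  have key: "\<forall>x0\<in>F. h x0 = 0"
  proof
    fix x0 assume x0: "x0 \<in> F"
    then have "x0 \<in> U" using U by blast
    then obtain r where r: "r > 0" "ball x0 r \<subseteq> U" using U(1) openE by blast
    define c where "c = x0 + (1/2) *\<^sub>R n"
    define \<rho> where "\<rho> = min (r/2) (1/4)"
    have prc0: "pr c = x0"
    proof -
      have "(c - a) \<bullet> n = n \<bullet> (x0 - a) + 1/2 * (n \<bullet> n)"
        by (simp add: c_def inner_diff_left inner_add_left inner_commute algebra_simps)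
      then have "(c - a) \<bullet> n = 1/2" using orth[OF x0] nn by simp
      then show ?thesis by (simp add: pr_def c_def)
    qed
    have ca: "(c - a) \<bullet> n = 1/2"
    proof -
      have "(c - a) \<bullet> n = n \<bullet> (x0 - a) + 1/2 * (n \<bullet> n)"
        by (simp add: c_def inner_diff_left inner_add_left inner_commute algebra_simps)
      then show ?thesis using orth[OF x0] nn by simp
    qed
    have ballP: "ball c \<rho> \<subseteq> P"
    proof
      fix y assume "y \<in> ball c \<rho>"
      then have wy: "norm (y - c) < \<rho>" by (simp add: dist_norm norm_minus_commute)
      define w where "w = y - c"
      have wn: "\<bar>w \<bullet> n\<bar> \<le> norm w" using Cauchy_Schwarz_ineq2[of w n] nnorm by simp
      have ya: "(y - a) \<bullet> n = w \<bullet> n + 1/2"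
        using ca by (simp add: w_def inner_diff_left algebra_simps)
      have t01: "(y - a) \<bullet> n \<in> {0..1}" using ya wn wy unfolding w_def \<rho>_def by auto
      have "pr y - x0 = w - (w \<bullet> n) *\<^sub>R n"
        using ya prc0 ca by (simp add: pr_def w_def c_def algebra_simps)
      then have "norm (pr y - x0) \<le> norm w + norm ((w \<bullet> n) *\<^sub>R n)"
        by (metis norm_triangle_ineq4)
      also have "norm ((w \<bullet> n) *\<^sub>R n) = \<bar>w \<bullet> n\<bar>" using nnorm by simp
      finally have "norm (pr y - x0) < r" using wn wy unfolding w_def \<rho>_def by auto
      then have "pr y \<in> U" using r by (simp add: dist_norm norm_minus_commute subset_iff)
      moreover have "n \<bullet> pr y = n \<bullet> a"
        using nn by (simp add: pr_def inner_diff_right inner_diff_left inner_commute)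
      ultimately have "pr y \<in> F" using U(2) H by blast
      then show "y \<in> P" using Pchar t01 by blast
    qed
    have "f c = 0"
    proof (rule zero_from_integral[OF fc _ fi fI0 _ ballP])
      show "\<forall>x. 0 \<le> f x" by (simp add: f_def)
      show "c \<in> ball c \<rho>" using r by (simp add: \<rho>_def)
    qed simp
    then show "h x0 = 0" by (simp add: f_def prc0)
  qed
  show "g = (\<lambda>x. if x \<in> F then p x else 0)"
  proof
    fix x show "g x = (if x \<in> F then p x else 0)"
      using key by (simp add: gdef h_def)
  qed
qed
lemma interp_eq:
  fixes T :: "'a::euclidean_space set"
  assumes el: "polytopal_element T FT" and w: "w \<in> polys k"
  shows "interpT T FT k w = (w, \<lambda>F. if F \<in> FT then (\<lambda>x. if x \<in> F then w x else 0) else (\<lambda>_. 0))"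
proof -
  have T: "open T" "bounded T" "T \<noteq> {}" using elem_props[OF el] by blast+
  have "projT T k w = w" by (rule projT_poly[OF w T])
  moreover have "\<And>F. F \<in> FT \<Longrightarrow> projF T F k w = (\<lambda>x. if x \<in> F then w x else 0)"
  proof -
    fix F assume F: "F \<in> FT"
    have "F \<subseteq> closure T" using face_props(2)[OF el F] unfolding frontier_def by blast
    then have bF: "bounded F" using T(2) bounded_closure bounded_subset by blast
    show "projF T F k w = (\<lambda>x. if x \<in> F then w x else 0)"
      by (rule projF_poly[OF w face_props(1)[OF el F] bF face_props(3,4)[OF el F] normal_ok[OF el F]])
  qed
  ultimately show ?thesis unfolding interpT_def by (auto intro!: ext)
qed

lemma decomp:
  fixes T :: "'a::euclidean_space set"
  assumes el: "polytopal_element T FT" and u: "u \<in> UT FT k"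
  shows "bdiff FT u \<in> UT FT k" "interpT T FT k (fst u) \<in> UT FT k"
    "u = hho_add (hho_scale 1 (bdiff FT u)) (hho_scale 1 (interpT T FT k (fst u)))"
proof -
  obtain uT uF where uu: "u = (uT, uF)" by (cases u)
  have uT: "uT \<in> polys k" and uF: "\<forall>F\<in>FT. uF F \<in> polysF F k" and uF0: "\<forall>F. F \<notin> FT \<longrightarrow> uF F = (\<lambda>_. 0)"
    using u unfolding uu UT_def by blast+
  have ie: "interpT T FT k uT = (uT, \<lambda>F. if F \<in> FT then (\<lambda>x. if x \<in> F then uT x else 0) else (\<lambda>_. 0))"
    by (rule interp_eq[OF el uT])
  show "bdiff FT u \<in> UT FT k"
  proof -
    have "\<forall>F\<in>FT. (\<lambda>x. if x \<in> F then uF F x - uT x else 0) \<in> polysF F k"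
    proof
      fix F assume F: "F \<in> FT"
      then obtain pF where pF: "pF \<in> polys k" "uF F = (\<lambda>x. if x \<in> F then pF x else 0)"
        using uF unfolding polysF_def by blast
      have "(\<lambda>x. if x \<in> F then uF F x - uT x else 0) = (\<lambda>x. if x \<in> F then (\<lambda>x. pF x - uT x) x else 0)"
        using pF by auto
      moreover have "(\<lambda>x. pF x - uT x) \<in> polys k" using pF uT polys_diff by blast
      ultimately show "(\<lambda>x. if x \<in> F then uF F x - uT x else 0) \<in> polysF F k"
        unfolding polysF_def mem_Collect_eq by (intro exI[of _ "\<lambda>x. pF x - uT x"]) simp
    qed
    moreover have "bdiff FT u = ((\<lambda>_. 0), \<lambda>F. if F \<in> FT then (\<lambda>x. if x \<in> F then uF F x - uT x else 0) else (\<lambda>_. 0))"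
      unfolding bdiff_def uu fst_conv snd_conv by (rule refl)
    ultimately show ?thesis using polys_zero[of k] unfolding UT_def by simp
  qed
  show "interpT T FT k (fst u) \<in> UT FT k"
    unfolding uu fst_conv ie UT_def polysF_def using uT by auto
  show "u = hho_add (hho_scale 1 (bdiff FT u)) (hho_scale 1 (interpT T FT k (fst u)))"
  proof -
    have e1: "(\<lambda>x. 1 * fst (bdiff FT u) x + 1 * fst (interpT T FT k (fst u)) x) = uT"
      by (simp add: bdiff_def ie uu)
    have e2: "(\<lambda>F x. 1 * snd (bdiff FT u) F x + 1 * snd (interpT T FT k (fst u)) F x) = uF"
    proof (intro ext)
      fix F x show "1 * snd (bdiff FT u) F x + 1 * snd (interpT T FT k (fst u)) F x = uF F x"
      proof (cases "F \<in> FT")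
        case True
        then obtain pF where pF: "uF F = (\<lambda>x. if x \<in> F then pF x else 0)"
          using uF unfolding polysF_def by blast
        show ?thesis using True by (simp add: bdiff_def ie uu pF)
      next
        case False then show ?thesis using uF0 by (simp add: bdiff_def ie uu)
      qed
    qed
    have "hho_add (hho_scale 1 (bdiff FT u)) (hho_scale 1 (interpT T FT k (fst u))) =
      ((\<lambda>x. 1 * fst (bdiff FT u) x + 1 * fst (interpT T FT k (fst u)) x),
       (\<lambda>F x. 1 * snd (bdiff FT u) F x + 1 * snd (interpT T FT k (fst u)) F x))"
      unfolding hho_add_def hho_scale_def by (simp only: fst_conv snd_conv)
    then have "hho_add (hho_scale 1 (bdiff FT u)) (hho_scale 1 (interpT T FT k (fst u))) = (uT, uF)"
      by (simp only: e1 e2)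
    then show ?thesis using uu by simp
  qed
qed

theorem proposition3:
  fixes T :: "'a::euclidean_space set" and FT :: "'a set set" and k :: nat
    and s :: "'a hho \<Rightarrow> 'a hho \<Rightarrow> real"
  assumes elem: "polytopal_element T FT"
    and bilin: "bilinear_on (UT FT k) s"
    and S1: "\<forall>u\<in>UT FT k. \<forall>v\<in>UT FT k. s u v = s v u" "\<forall>v\<in>UT FT k. 0 \<le> s v v"
    and S2: "\<exists>\<eta>>0. \<forall>v\<in>UT FT k. (1 / \<eta>) * norm1T_sq T FT v \<le> aT T FT k s v v \<and>
                                 aT T FT k s v v \<le> \<eta> * norm1T_sq T FT v"
    and S3: "\<forall>w\<in>polys (Suc k). \<forall>v\<in>UT FT k. s (interpT T FT k w) v = 0"
    and res: "\<forall>u\<in>UT FT k. \<forall>u'\<in>UT FT k. \<forall>v\<in>UT FT k. \<forall>v'\<in>UT FT k.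
               resT T FT k u = resT T FT k u' \<and> (\<forall>F\<in>FT. resTF T FT k F u = resTF T FT k F u') \<and>
               resT T FT k v = resT T FT k v' \<and> (\<forall>F\<in>FT. resTF T FT k F v = resTF T FT k F v')
               \<longrightarrow> s u v = s u' v'"
  shows "\<forall>u\<in>UT FT k. \<forall>v\<in>UT FT k. s u v = s (bdiff FT u) (bdiff FT v)"
proof (intro ballI)
  fix u v assume u: "u \<in> UT FT k" and v: "v \<in> UT FT k"
  have B1: "\<forall>u\<in>UT FT k. \<forall>u'\<in>UT FT k. \<forall>v\<in>UT FT k. \<forall>a b. s (hho_add (hho_scale a u) (hho_scale b u')) v = a * s u v + b * s u' v"
    and B2: "\<forall>u\<in>UT FT k. \<forall>v\<in>UT FT k. \<forall>v'\<in>UT FT k. \<forall>a b. s u (hho_add (hho_scale a v) (hho_scale b v')) = a * s u v + b * s u v'"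
    using bilin unfolding bilinear_on_def by blast+
  have du: "bdiff FT u \<in> UT FT k" "interpT T FT k (fst u) \<in> UT FT k"
    and eu: "u = hho_add (hho_scale 1 (bdiff FT u)) (hho_scale 1 (interpT T FT k (fst u)))"
    using decomp[OF elem u] by blast+
  have dv: "bdiff FT v \<in> UT FT k" "interpT T FT k (fst v) \<in> UT FT k"
    and ev: "v = hho_add (hho_scale 1 (bdiff FT v)) (hho_scale 1 (interpT T FT k (fst v)))"
    using decomp[OF elem v] by blast+
  have pu: "fst u \<in> polys (Suc k)" using u polys_Suc unfolding UT_def by auto
  have pv: "fst v \<in> polys (Suc k)" using v polys_Suc unfolding UT_def by auto
  have "s u v = 1 * s (bdiff FT u) v + 1 * s (interpT T FT k (fst u)) v"
    using B1 du v eu by metis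
  also have "s (interpT T FT k (fst u)) v = 0" using S3 pu v by blast
  finally have 1: "s u v = s (bdiff FT u) v" by simp
  have "s (bdiff FT u) v = 1 * s (bdiff FT u) (bdiff FT v) + 1 * s (bdiff FT u) (interpT T FT k (fst v))"
    using B2 du dv ev by metis
  also have "s (bdiff FT u) (interpT T FT k (fst v)) = s (interpT T FT k (fst v)) (bdiff FT u)"
    using S1(1) du dv by blast
  also have "\<dots> = 0" using S3 pv du by blast
  finally show "s u v = s (bdiff FT u) (bdiff FT v)" using 1 by simp
qed
end
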